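(* Let $K$ be a finite field of characteristic $p$ and order $q$, let $s$ be a positive integer with $\gcd(s,q-1)=1$, and let $\tau$ be the permutation of $\mathcal{W}_{K,s}$ defined below, of order $m$. Let $A_0,\dots,A_{k-1}$ be distinct elements of $\mathcal{W}_{K,s}$ with $\tau(A_i)=A_{i+1}$ for all $i\in\mathbb{Z}/k\mathbb{Z}$. Then $k\mid m$, and $N_{A_0}=N_{A_1}=\cdots=N_{A_{k-1}}$, and this common value is a multiple of $m/k$.
   Context: $\zeta=\exp(2\pi i/p)$, $\psi(x)=\zeta^{\mathrm{Tr}(x)}$ with $\mathrm{Tr}$ the absolute trace of $K$ to $\mathbb{F}_p$; $W_u=\sum_{x\in K}\psi(x^s-ux)$ for $u\in K$; $\mathcal{W}_{K,s}=\{W_u:u\in K^\times\}$; for $A\in\mathbb{Z}[\zeta]$, $N_A=|\{u\in K^\times: W_u=A\}|$. Let $\gamma$ be a primitive element of $\mathbb{F}_p$ and $\sigma\in\mathrm{Gal}(\mathbb{Q}(\zeta)/\mathbb{Q})$ with $\sigma(\zeta)=\zeta^\gamma$; it is known that $\sigma(W_u)=W_{\gamma^{1-1/s}u}$ for all $u$ (with $1/s$ the inverse of $s$ mod $p-1$), so $\sigma$ restricts to a permutation $\tau$ of $\mathcal{W}_{K,s}$. *)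

theory Defs
  imports "HOL-Analysis.Analysis" "HOL-Number_Theory.Number_Theory"
begin

definition ff_degree :: "'a::{field,finite} itself \<Rightarrow> nat" where
  "ff_degree (_::'a itself) = (THE n. CARD('a) = CHAR('a) ^ n)"

definition abs_trace :: "'a::{field,finite} \<Rightarrow> 'a" where
  "abs_trace x = (\<Sum>i<ff_degree TYPE('a). x ^ (CHAR('a) ^ i))"

definition trace_nat :: "'a::{field,finite} \<Rightarrow> nat" where
  "trace_nat x = (THE k. k < CHAR('a) \<and> of_nat k = abs_trace x)"

definition zeta :: "nat \<Rightarrow> complex" where
  "zeta p = cis (2 * pi / real p)"

definition psi :: "'a::{field,finite} \<Rightarrow> complex" where
  "psi x = zeta CHAR('a) ^ trace_nat x"

definition Wsum :: "nat \<Rightarrow> 'a::{field,finite} \<Rightarrow> complex" where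
  "Wsum s u = (\<Sum>x\<in>UNIV. psi (x ^ s - u * x))"

definition Wset :: "'a::{field,finite} itself \<Rightarrow> nat \<Rightarrow> complex set" where
  "Wset (_::'a itself) s = (Wsum s :: 'a \<Rightarrow> complex) ` (UNIV - {0})"

definition NA :: "'a::{field,finite} itself \<Rightarrow> nat \<Rightarrow> complex \<Rightarrow> nat" where
  "NA (_::'a itself) s A = card {u::'a. u \<noteq> 0 \<and> Wsum s u = A}"

text \<open>The Galois automorphism sigma of Q(zeta_p) with sigma(zeta) = zeta^g, applied to an
  element of Z[zeta] written as an integer combination of powers of zeta.\<close>
definition gal_sigma :: "nat \<Rightarrow> nat \<Rightarrow> complex \<Rightarrow> complex" where
  "gal_sigma p g z = (THE w. \<exists>c::nat \<Rightarrow> int.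
      z = (\<Sum>j<p. of_int (c j) * zeta p ^ j) \<and> w = (\<Sum>j<p. of_int (c j) * zeta p ^ (g * j)))"

definition tau_order :: "'a::{field,finite} itself \<Rightarrow> nat \<Rightarrow> nat \<Rightarrow> nat" where
  "tau_order T s g = (LEAST n. 0 < n \<and>
      (\<forall>A\<in>Wset T s. (gal_sigma CHAR('a) g ^^ n) A = A))"

end

theory Submission
  imports Defs
begin


abbreviation iev :: "int poly \<Rightarrow> complex \<Rightarrow> complex" where
  "iev g z \<equiv> poly (map_poly of_int g) z"

lemma iev_pCons: "iev (pCons c g) z = of_int c + z * iev g z"
  by (auto simp: map_poly_pCons)

lemma iev_sum:
  assumes "degree g < N"
  shows "iev g z = (\<Sum>i<N. of_int (Polynomial.coeff g i) * z ^ i)"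
proof -
  have d: "degree (map_poly (of_int :: int \<Rightarrow> complex) g) \<le> degree g"
    by (rule map_poly_degree_leq)
  have "iev g z = (\<Sum>i\<le>degree (map_poly (of_int :: int \<Rightarrow> complex) g). of_int (Polynomial.coeff g i) * z ^ i)"
    by (simp add: poly_altdef coeff_map_poly)
  also have "\<dots> = (\<Sum>i<N. of_int (Polynomial.coeff g i) * z ^ i)"
  proof (rule sum.mono_neutral_left)
    show "{..degree (map_poly (of_int :: int \<Rightarrow> complex) g)} \<subseteq> {..<N}" using d assms by auto
    show "\<forall>i\<in>{..<N} - {..degree (map_poly (of_int :: int \<Rightarrow> complex) g)}. of_int (Polynomial.coeff g i) * z ^ i = 0"
    proof
      fix i assume "i \<in> {..<N} - {..degree (map_poly (of_int :: int \<Rightarrow> complex) g)}"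
      then have "Polynomial.coeff (map_poly (of_int :: int \<Rightarrow> complex) g) i = 0" by (auto intro: coeff_eq_0)
      then show "of_int (Polynomial.coeff g i) * z ^ i = 0" by (simp add: coeff_map_poly)
    qed
  qed auto
  finally show ?thesis .
qed

lemma iev_add: "iev (f + g) z = iev f z + iev g z"
proof -
  define N where "N = Suc (max (degree f) (degree g))"
  have "degree (f + g) < N" unfolding N_def using degree_add_le_max[of f g] by linarith
  then have "iev (f + g) z = (\<Sum>i<N. of_int (Polynomial.coeff (f+g) i) * z ^ i)" by (rule iev_sum)
  also have "\<dots> = (\<Sum>i<N. of_int (Polynomial.coeff f i) * z ^ i) + (\<Sum>i<N. of_int (Polynomial.coeff g i) * z ^ i)"
    by (simp add: sum.distrib distrib_right)
  also have "\<dots> = iev f z + iev g z"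
    by (subst (1 2) iev_sum[of _ N]) (auto simp: N_def)
  finally show ?thesis .
qed

lemma iev_smult: "iev (Polynomial.smult c g) z = of_int c * iev g z"
proof -
  define N where "N = Suc (degree g)"
  have "iev (Polynomial.smult c g) z = (\<Sum>i<N. of_int (Polynomial.coeff (Polynomial.smult c g) i) * z ^ i)"
    by (rule iev_sum) (use degree_smult_le[of c g] in \<open>auto simp: N_def\<close>)
  also have "\<dots> = of_int c * (\<Sum>i<N. of_int (Polynomial.coeff g i) * z ^ i)"
    by (simp add: sum_distrib_left mult_ac)
  also have "\<dots> = of_int c * iev g z" by (subst iev_sum[of g N]) (auto simp: N_def)
  finally show ?thesis .
qed

lemma iev_mult: "iev (f * g) z = iev f z * iev g z"
proof (induction f)
  case (pCons a f)
  have "iev (pCons a f * g) z = iev (Polynomial.smult a g + pCons 0 (f * g)) z" by simp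
  also have "\<dots> = of_int a * iev g z + z * iev (f * g) z"
    by (simp only: iev_add iev_smult iev_pCons) simp
  also have "\<dots> = iev (pCons a f) z * iev g z"
    by (simp only: pCons.IH iev_pCons) (simp add: algebra_simps)
  finally show ?case .
qed simp

lemma iev_const: "iev [:c:] z = of_int c"
  by (simp add: map_poly_pCons)

section \<open>zeta\<close>

lemma zeta_pow: "zeta p ^ n = cis (2 * pi * real n / real p)"
proof -
  have "zeta p ^ n = cis (real n * (2 * pi / real p))" unfolding zeta_def by (rule Complex.DeMoivre)
  then show ?thesis by (simp add: field_simps)
qed

lemma zeta_pow_p: "p > 0 \<Longrightarrow> zeta p ^ p = 1"
  by (simp add: zeta_pow)

lemma zeta_pow_mod: "p > 0 \<Longrightarrow> zeta p ^ n = zeta p ^ (n mod p)"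
proof -
  assume "p > 0"
  have "zeta p ^ n = zeta p ^ (p * (n div p) + n mod p)" by simp
  also have "\<dots> = zeta p ^ (n mod p)"
    by (simp only: power_add power_mult zeta_pow_p[OF \<open>p>0\<close>]) simp
  finally show ?thesis .
qed

lemma zeta_pow_eq_1:
  assumes "p > 0" "zeta p ^ j = 1"
  shows "p dvd j"
proof -
  have "cos (2 * pi * real j / real p) = 1"
    using assms(2) unfolding zeta_pow by (metis cis.sel(1) one_complex.sel(1))
  then obtain n :: int where n: "2 * pi * real j / real p = n * 2 * pi"
    by (auto simp: cos_one_2pi_int)
  then have "real j = real_of_int n * real p" using assms(1)
    by (simp add: field_simps)
  then have "int j = n * int p" by (metis of_int_eq_iff of_int_mult of_int_of_nat_eq)
  then have "int p dvd int j" by simp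
  then show ?thesis by simp
qed

lemma zeta_sum_zero:
  assumes "p > 1" "\<not> p dvd g"
  shows "(\<Sum>j<p. zeta p ^ (g * j)) = 0"
proof -
  have ne: "zeta p ^ g \<noteq> 1" using zeta_pow_eq_1 assms by auto
  have "(zeta p ^ g) ^ p = 1"
    by (metis assms(1) mult.commute power_mult power_one zeta_pow_p zero_less_one less_trans)
  then show ?thesis using ne by (simp add: power_mult sum_gp_strict)
qed


section \<open>Cyclotomic polynomial for a prime\<close>

definition cycl :: "nat \<Rightarrow> int poly" where "cycl p = (\<Sum>j<p. Polynomial.monom 1 j)"

lemma coeff_cycl: "Polynomial.coeff (cycl p) i = (if i < p then 1 else 0)"
  by (simp add: cycl_def coeff_sum coeff_monom)

lemma degree_cycl: assumes "p > 0" shows "degree (cycl p) = p - 1"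
proof (rule antisym)
  show "degree (cycl p) \<le> p - 1" by (rule degree_le) (auto simp: coeff_cycl)
  show "p - 1 \<le> degree (cycl p)" by (rule le_degree) (use assms in \<open>simp add: coeff_cycl\<close>)
qed

lemma cycl_ne0: "p > 0 \<Longrightarrow> cycl p \<noteq> 0"
  by (metis coeff_cycl coeff_0 zero_neq_one)

lemma poly_cycl: "poly (cycl p) x = (\<Sum>j<p. x ^ j)"
  by (simp add: cycl_def poly_sum poly_monom)

lemma iev_cycl: assumes "prime p" shows "iev (cycl p) (zeta p) = 0"
proof -
  have p1: "p > 1" using assms prime_gt_1_nat by blast
  have "iev (cycl p) (zeta p) = (\<Sum>i<p. of_int (Polynomial.coeff (cycl p) i) * zeta p ^ i)"
    by (rule iev_sum) (use p1 in \<open>simp add: degree_cycl\<close>)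
  also have "\<dots> = (\<Sum>i<p. zeta p ^ (1 * i))" by (simp add: coeff_cycl)
  also have "\<dots> = 0" by (rule zeta_sum_zero) (use p1 in auto)
  finally show ?thesis .
qed

lemma content_cycl: assumes "p > 0" shows "content (cycl p) = 1"
proof -
  have "content (cycl p) dvd Polynomial.coeff (cycl p) 0" by (rule content_dvd_coeff)
  then have "content (cycl p) dvd 1" using assms by (simp add: coeff_cycl)
  then have "normalize (content (cycl p)) = 1" by (rule is_unit_normalize)
  then show ?thesis by (metis normalize_content)
qed

lemma shift_cycl:
  "[:0,1:] * pcompose (cycl p) [:1,1:] = [:1,1:] ^ p - 1"
proof (rule poly_ext)
  fix x :: int
  have "poly ([:0,1:] * pcompose (cycl p) [:1,1:]) x = x * (\<Sum>j<p. (1 + x) ^ j)"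
    by (simp add: poly_pcompose poly_cycl)
  also have "\<dots> = (1 + x) ^ p - 1"
    using one_diff_power_eq[of "1 + x" p] by (simp add: algebra_simps)
  also have "\<dots> = poly ([:1,1:] ^ p - 1) x" by (simp add: poly_power)
  finally show "poly ([:0,1:] * pcompose (cycl p) [:1,1:]) x = poly ([:1,1:] ^ p - 1) x" .
qed

lemma coeff_shift_cycl:
  "Polynomial.coeff (pcompose (cycl p) [:1,1:]) j = int (p choose Suc j)"
proof -
  have "Polynomial.coeff (pcompose (cycl p) [:1,1:]) j
      = Polynomial.coeff ([:0,1:] * pcompose (cycl p) [:1,1:]) (Suc j)" by simp
  also have "\<dots> = Polynomial.coeff ([:1,1:] ^ p) (Suc j)" by (simp only: shift_cycl coeff_diff) (simp add: coeff_1)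
  also have "\<dots> = int (p choose Suc j)"
  proof (cases "Suc j \<le> p")
    case True then show ?thesis by (simp add: coeff_linear_poly_power)
  next
    case False
    have "degree ([:1,1::int:] ^ p) \<le> 1 * p"
      using degree_power_le[of "[:1,1::int:]" p] by simp
    then have "Polynomial.coeff ([:1,1::int:] ^ p) (Suc j) = 0" using False by (intro coeff_eq_0) auto
    then show ?thesis using False by simp
  qed
  finally show ?thesis .
qed

lemma eisenstein_aux:
  fixes A B P :: "int poly" and p :: nat
  assumes "prime p" "A * B = P" "Polynomial.coeff P 0 = int p"
    "\<forall>j<degree P. int p dvd Polynomial.coeff P j" "\<not> int p dvd lead_coeff P"
    "int p dvd Polynomial.coeff A 0" "degree A > 0" "degree B > 0"
  shows False
proof -
  have pr: "prime (int p)" using assms(1) by simp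
  have A0: "A \<noteq> 0" "B \<noteq> 0" using assms(7,8) by auto
  have degP: "degree P = degree A + degree B" using assms(2) A0 degree_mult_eq by auto
  have ab: "Polynomial.coeff A 0 * Polynomial.coeff B 0 = int p" using assms(2,3) coeff_mult_0 by metis
  have nB0: "\<not> int p dvd Polynomial.coeff B 0"
  proof
    assume "int p dvd Polynomial.coeff B 0"
    then have "int p * int p dvd int p" using assms(6) ab by (metis mult_dvd_mono)
    then have "int p dvd 1" using pr by (metis dvd_mult_cancel_left mult.right_neutral not_prime_0)
    then show False using pr by (simp add: prime_int_iff)
  qed
  have lead: "lead_coeff P = lead_coeff A * lead_coeff B" using assms(2) lead_coeff_mult by metis
  have nAl: "\<not> int p dvd lead_coeff A" using lead assms(5) by (metis dvd_mult2)
  define r where "r = (LEAST i. \<not> int p dvd Polynomial.coeff A i)"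
  have r1: "\<not> int p dvd Polynomial.coeff A r" unfolding r_def by (rule LeastI[of _ "degree A"]) (rule nAl)
  have r2: "r \<le> degree A" unfolding r_def by (rule Least_le) (rule nAl)
  have r3: "\<forall>i<r. int p dvd Polynomial.coeff A i" unfolding r_def using not_less_Least by blast
  have "Polynomial.coeff P r = (\<Sum>i\<le>r. Polynomial.coeff A i * Polynomial.coeff B (r - i))"
    using assms(2) coeff_mult by metis
  also have "\<dots> = (\<Sum>i<r. Polynomial.coeff A i * Polynomial.coeff B (r - i)) + Polynomial.coeff A r * Polynomial.coeff B 0"
    by (simp add: lessThan_Suc_atMost[symmetric])
  finally have eq: "Polynomial.coeff P r = (\<Sum>i<r. Polynomial.coeff A i * Polynomial.coeff B (r - i)) + Polynomial.coeff A r * Polynomial.coeff B 0" .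
  have d1: "int p dvd (\<Sum>i<r. Polynomial.coeff A i * Polynomial.coeff B (r - i))"
    by (intro dvd_sum) (use r3 in auto)
  have d2: "int p dvd Polynomial.coeff P r" using assms(4) r2 degP assms(8) by auto
  have "int p dvd Polynomial.coeff A r * Polynomial.coeff B 0"
    using d1 d2 eq by (metis dvd_add_right_iff)
  then show False using pr r1 nB0 by (simp add: prime_dvd_mult_iff)
qed

lemma eisenstein_shift:
  assumes "prime p" "A * B = pcompose (cycl p) [:1,1:]"
  shows "degree A = 0 \<or> degree B = 0"
proof (rule ccontr)
  assume nz: "\<not> (degree A = 0 \<or> degree B = 0)"
  define P where "P = pcompose (cycl p) [:1,1:]"
  have p1: "p > 1" using assms prime_gt_1_nat by blast
  have degP: "degree P = p - 1" unfolding P_def using p1 by (simp add: degree_pcompose degree_cycl)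
  have c0: "Polynomial.coeff P 0 = int p" unfolding P_def coeff_shift_cycl by simp
  have "Polynomial.coeff P (p - 1) = 1" unfolding P_def coeff_shift_cycl using p1 by simp
  then have "lead_coeff P = 1" using degP by simp
  then have cl: "\<not> int p dvd lead_coeff P" using p1 by simp
  have cd: "\<forall>j<degree P. int p dvd Polynomial.coeff P j"
  proof (intro allI impI)
    fix j assume "j < degree P"
    then have "Suc j < p" using degP by simp
    then have "p dvd (p choose Suc j)" using assms(1) p1 by (intro dvd_choose_prime) auto
    then show "int p dvd Polynomial.coeff P j" unfolding P_def coeff_shift_cycl by presburger
  qed
  have ab: "Polynomial.coeff A 0 * Polynomial.coeff B 0 = int p" using assms(2) c0 coeff_mult_0 P_def by metis
  have pr: "prime (int p)" using assms(1) by simp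
  have "int p dvd Polynomial.coeff A 0 \<or> int p dvd Polynomial.coeff B 0"
    using ab pr by (metis dvd_refl prime_dvd_mult_iff)
  then show False
  proof
    assume "int p dvd Polynomial.coeff A 0"
    then show False using eisenstein_aux[of p A B P] assms nz c0 cd cl P_def by auto
  next
    assume "int p dvd Polynomial.coeff B 0"
    then show False using eisenstein_aux[of p B A P] assms nz c0 cd cl P_def by (auto simp: mult.commute)
  qed
qed


lemma no_small_root:
  assumes "prime p" "f \<noteq> 0" "degree f < p - 1" "iev f (zeta p) = 0"
  shows False
proof -
  have p1: "p > 1" using assms prime_gt_1_nat by blast
  define n where "n = (LEAST n. \<exists>g. g \<noteq> 0 \<and> iev g (zeta p) = 0 \<and> degree g = n)"
  have "\<exists>g. g \<noteq> 0 \<and> iev g (zeta p) = 0 \<and> degree g = n"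
    unfolding n_def by (rule LeastI[of _ "degree f"]) (use assms in auto)
  then obtain g where g: "g \<noteq> 0" "iev g (zeta p) = 0" "degree g = n" by auto
  have minim: "\<And>h. h \<noteq> 0 \<Longrightarrow> iev h (zeta p) = 0 \<Longrightarrow> n \<le> degree h"
    unfolding n_def by (rule Least_le) auto
  have nf: "n \<le> degree f" using minim assms by auto
  have gpos: "degree g > 0"
  proof (rule ccontr)
    assume "\<not> degree g > 0"
    then have "g = [:Polynomial.coeff g 0:]" by (metis degree_0_id neq0_conv)
    then have "iev g (zeta p) = of_int (Polynomial.coeff g 0)" by (metis iev_const)
    moreover have "Polynomial.coeff g 0 \<noteq> 0" using g(1) \<open>g = _\<close> by (metis pCons_0_0)
    ultimately show False using g(2) by simp
  qed
  define Phi where "Phi = cycl p"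
  have Phi0: "Phi \<noteq> 0" using cycl_ne0 p1 Phi_def by auto
  obtain a q where aq: "a \<noteq> 0" "Polynomial.smult a Phi = g * q + pseudo_mod Phi g"
    using pseudo_mod(1)[OF g(1), of Phi] by blast
  have rdeg: "pseudo_mod Phi g = 0 \<or> degree (pseudo_mod Phi g) < degree g"
    using pseudo_mod(2)[OF g(1)] by blast
  have "iev (Polynomial.smult a Phi) (zeta p) = iev g (zeta p) * iev q (zeta p) + iev (pseudo_mod Phi g) (zeta p)"
    using aq(2) by (metis iev_add iev_mult)
  then have "iev (pseudo_mod Phi g) (zeta p) = 0"
    using g(2) iev_cycl[OF assms(1)] by (simp add: iev_smult Phi_def)
  then have r0: "pseudo_mod Phi g = 0" using rdeg minim g(3) by force
  then have eq: "Polynomial.smult a Phi = g * q" using aq by simp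
  have q0: "q \<noteq> 0" using eq aq(1) Phi0 by auto
  have "degree (Polynomial.smult a Phi) = p - 1" using aq(1) p1 by (simp add: Phi_def degree_cycl)
  then have dsum: "degree g + degree q = p - 1" using eq degree_mult_eq[OF g(1) q0] by simp
  then have qpos: "degree q > 0" using nf assms(3) g(3) by linarith
  have "primitive_part (Polynomial.smult a Phi) = primitive_part g * primitive_part q"
    by (simp add: eq primitive_part_mult)
  moreover have "primitive_part (Polynomial.smult a Phi) = Polynomial.smult (unit_factor a) Phi"
    using p1 by (simp add: primitive_part_smult primitive_part_prim content_cycl Phi_def)
  ultimately have e1: "Polynomial.smult (unit_factor a) Phi = primitive_part g * primitive_part q" by simp
  have uu: "unit_factor a * unit_factor a = 1" using aq(1) by (simp add: sgn_if)
  have "Phi = Polynomial.smult (unit_factor a) (Polynomial.smult (unit_factor a) Phi)"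
    using uu by simp
  also have "\<dots> = Polynomial.smult (unit_factor a) (primitive_part g) * primitive_part q"
    using e1 by simp
  finally have e2: "Phi = Polynomial.smult (unit_factor a) (primitive_part g) * primitive_part q" .
  have "pcompose Phi [:1,1:] = pcompose (Polynomial.smult (unit_factor a) (primitive_part g)) [:1,1:] * pcompose (primitive_part q) [:1,1:]"
    by (subst e2) (rule pcompose_mult)
  then have "degree (pcompose (Polynomial.smult (unit_factor a) (primitive_part g)) [:1,1:]) = 0 \<or>
             degree (pcompose (primitive_part q) [:1,1:]) = 0"
    using eisenstein_shift[OF assms(1)] Phi_def by metis
  moreover have "degree (primitive_part g) = degree g" "degree (primitive_part q) = degree q"
    by (rule degree_primitive_part)+
  moreover have "unit_factor a \<noteq> 0" using aq(1) by (simp add: sgn_if)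
  ultimately show False using gpos qpos by (simp add: degree_pcompose)
qed

lemma zeta_lin_indep:
  assumes "prime p" "(\<Sum>j<p. of_int (e j) * zeta p ^ j) = 0"
  shows "\<forall>j<p. e j = e (p - 1)"
proof -
  have p1: "p > 1" using assms prime_gt_1_nat by blast
  define f where "f = (\<Sum>j<p. Polynomial.monom (e j - e (p - 1)) j)"
  have cf: "Polynomial.coeff f i = (if i < p then e i - e (p - 1) else 0)" for i
    by (simp add: f_def coeff_sum coeff_monom)
  have dp: "degree f < p"
  proof -
    have "degree f \<le> p - 1" by (rule degree_le) (auto simp: cf)
    then show ?thesis using p1 by linarith
  qed
  have "iev f (zeta p) = (\<Sum>i<p. of_int (Polynomial.coeff f i) * zeta p ^ i)"
    by (rule iev_sum[OF dp])
  also have "\<dots> = (\<Sum>i<p. of_int (e i) * zeta p ^ i) - of_int (e (p - 1)) * (\<Sum>i<p. zeta p ^ (1 * i))"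
    by (simp add: cf sum_distrib_left sum_subtractf left_diff_distrib)
  also have "\<dots> = 0" using assms(2) zeta_sum_zero[of p 1] p1 by simp
  finally have ev: "iev f (zeta p) = 0" .
  have "f = 0"
  proof (rule ccontr)
    assume f0: "f \<noteq> 0"
    have "Polynomial.coeff f (degree f) \<noteq> 0" using f0 by simp
    moreover have "Polynomial.coeff f (p - 1) = 0" using cf by simp
    ultimately have "degree f \<noteq> p - 1" by metis
    then have "degree f < p - 1" using dp by linarith
    then show False using no_small_root[OF assms(1) f0 _ ev] by blast
  qed
  then show ?thesis using cf by (metis coeff_0 eq_iff_diff_eq_0)
qed

lemma gal_sigma_eq:
  assumes "prime p" "\<not> p dvd g" "z = (\<Sum>j<p. of_int (c j) * zeta p ^ j)"
  shows "gal_sigma p g z = (\<Sum>j<p. of_int (c j) * zeta p ^ (g * j))"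
  unfolding gal_sigma_def
proof (rule the_equality)
  show "\<exists>c'. z = (\<Sum>j<p. of_int (c' j) * zeta p ^ j) \<and>
      (\<Sum>j<p. of_int (c j) * zeta p ^ (g * j)) = (\<Sum>j<p. of_int (c' j) * zeta p ^ (g * j))"
    using assms(3) by blast
next
  fix w assume "\<exists>d. z = (\<Sum>j<p. of_int (d j) * zeta p ^ j) \<and> w = (\<Sum>j<p. of_int (d j) * zeta p ^ (g * j))"
  then obtain d where d: "z = (\<Sum>j<p. of_int (d j) * zeta p ^ j)" "w = (\<Sum>j<p. of_int (d j) * zeta p ^ (g * j))"
    by blast
  have "(\<Sum>j<p. of_int (c j - d j) * zeta p ^ j) = 0"
    using assms(3) d(1) by (simp add: left_diff_distrib sum_subtractf)
  then have "\<forall>j<p. c j - d j = c (p - 1) - d (p - 1)"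
    by (rule zeta_lin_indep[OF assms(1)])
  then obtain e0 where ce: "\<forall>j<p. c j - d j = e0" by blast
  have p1: "p > 1" using assms prime_gt_1_nat by blast
  have "(\<Sum>j<p. of_int (c j) * zeta p ^ (g * j)) - w = (\<Sum>j<p. of_int (c j - d j) * zeta p ^ (g * j))"
    using d(2) by (simp add: left_diff_distrib sum_subtractf)
  also have "\<dots> = (\<Sum>j<p. of_int e0 * zeta p ^ (g * j))"
    by (rule sum.cong) (use ce in auto)
  also have "\<dots> = of_int e0 * (\<Sum>j<p. zeta p ^ (g * j))"
    by (simp add: sum_distrib_left)
  also have "\<dots> = 0" using zeta_sum_zero[OF p1 assms(2)] by simp
  finally show "w = (\<Sum>j<p. of_int (c j) * zeta p ^ (g * j))" by simp
qed

lemma sum_group_mod: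
  fixes p :: nat
  assumes "finite X" "p > 0"
  shows "(\<Sum>x\<in>X. F (T x mod p)) = (\<Sum>j<p. of_nat (card {x\<in>X. T x mod p = j}) * (F j :: complex))"
proof -
  have "(\<Sum>x\<in>X. F (T x mod p)) = (\<Sum>j<p. \<Sum>x\<in>{x\<in>X. T x mod p = j}. F (T x mod p))"
  proof (rule sum.group[of X "{..<p}" "\<lambda>x. T x mod p" "\<lambda>x. F (T x mod p)", symmetric])
    show "finite X" by (rule assms(1))
    show "finite {..<p}" by simp
    show "(\<lambda>x. T x mod p) ` X \<subseteq> {..<p}" using assms(2) by auto
  qed
  also have "\<dots> = (\<Sum>j<p. \<Sum>x\<in>{x\<in>X. T x mod p = j}. F j)"
    by (intro sum.cong) auto
  also have "\<dots> = (\<Sum>j<p. of_nat (card {x\<in>X. T x mod p = j}) * F j)" by simp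
  finally show ?thesis .
qed

lemma gal_sigma_sum:
  assumes "prime p" "\<not> p dvd g" "finite X"
  shows "gal_sigma p g (\<Sum>x\<in>X. zeta p ^ T x) = (\<Sum>x\<in>X. zeta p ^ (g * T x))"
proof -
  have p0: "p > 0" using assms prime_gt_0_nat by blast
  define c where "c j = int (card {x\<in>X. T x mod p = j})" for j
  have "(\<Sum>x\<in>X. zeta p ^ T x) = (\<Sum>x\<in>X. zeta p ^ (T x mod p))"
    using zeta_pow_mod[OF p0] by simp
  also have "\<dots> = (\<Sum>j<p. of_int (c j) * zeta p ^ j)"
    unfolding c_def using sum_group_mod[OF assms(3) p0, of "\<lambda>j. zeta p ^ j"] by simp
  finally have z: "(\<Sum>x\<in>X. zeta p ^ T x) = (\<Sum>j<p. of_int (c j) * zeta p ^ j)" .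
  have "gal_sigma p g (\<Sum>x\<in>X. zeta p ^ T x) = (\<Sum>j<p. of_int (c j) * zeta p ^ (g * j))"
    by (rule gal_sigma_eq[OF assms(1,2) z])
  also have "\<dots> = (\<Sum>x\<in>X. zeta p ^ (g * (T x mod p)))"
    unfolding c_def using sum_group_mod[OF assms(3) p0, of "\<lambda>j. zeta p ^ (g * j)"] by simp
  also have "\<dots> = (\<Sum>x\<in>X. zeta p ^ (g * T x))"
  proof (rule sum.cong)
    fix x
    have "zeta p ^ (g * (T x mod p)) = zeta p ^ ((g * (T x mod p)) mod p)" by (rule zeta_pow_mod[OF p0])
    also have "\<dots> = zeta p ^ ((g * T x) mod p)" by (simp add: mod_mult_right_eq)
    also have "\<dots> = zeta p ^ (g * T x)" by (rule zeta_pow_mod[OF p0, symmetric])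
    finally show "zeta p ^ (g * (T x mod p)) = zeta p ^ (g * T x)" .
  qed simp
  finally show ?thesis .
qed



lemma CHAR_pos_ff: "CHAR('a::{field,finite}) > 0"
  by (rule finite_imp_CHAR_pos) simp

lemma CHAR_prime_ff: "prime CHAR('a::{field,finite})"
  using prime_CHAR_semidom CHAR_pos_ff by blast

lemma CHAR_gt1_ff: "CHAR('a::{field,finite}) > 1"
  using CHAR_prime_ff prime_gt_1_nat by blast

lemma of_nat_mod_CHAR': "(of_nat (a mod CHAR('a)) :: 'a::semiring_1_cancel) = of_nat a"
  by (simp add: of_nat_eq_iff_cong_CHAR cong_def)

lemma ff_pow_card: "(x::'a::{field,finite}) ^ CARD('a) = x"
proof (cases "x = 0")
  case False
  have "x * (\<Prod>y\<in>UNIV-{0}. x * y) = x * x ^ (card (UNIV :: 'a set) - 1) * \<Prod>(UNIV-{0})"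
    by (simp add: prod.distrib mult_ac)
  also have "x * x ^ (card (UNIV :: 'a set) - 1) = x ^ Suc (card (UNIV :: 'a set) - 1)"
    by (subst power_Suc) auto
  also have "Suc (card (UNIV :: 'a set) - 1) = card (UNIV :: 'a set)"
    using finite_UNIV_card_ge_0[where ?'a = 'a] by simp
  also have "(\<Prod>y\<in>UNIV-{0}. x * y) = (\<Prod>y\<in>UNIV-{0}. y)"
    by (rule prod.reindex_bij_witness[of _ "\<lambda>y. y / x" "\<lambda>y. x * y"]) (use False in auto)
  finally show ?thesis
    by simp
qed (use finite_UNIV_card_ge_0[where ?'a = 'a] in auto)

lemma card_ge2_ff: "CARD('a::{field,finite}) \<ge> 2"
proof -
  have "{0, 1::'a} \<subseteq> UNIV" by simp
  then have "card {0, 1::'a} \<le> CARD('a)" by (intro card_mono) auto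
  then show ?thesis by simp
qed

lemma ff_pow_card_minus1: "(x::'a::{field,finite}) \<noteq> 0 \<Longrightarrow> x ^ (CARD('a) - 1) = 1"
proof -
  assume x: "x \<noteq> 0"
  have "x * x ^ (CARD('a) - 1) = x ^ CARD('a)"
    using card_ge2_ff[where 'a='a] by (metis Suc_diff_1 not_numeral_le_zero not_gr0 power_Suc)
  also have "\<dots> = x * 1" by (simp add: ff_pow_card)
  finally show ?thesis using x by simp
qed

lemma ff_pow_cong:
  assumes "(x::'a::{field,finite}) \<noteq> 0" "[a = b] (mod (CARD('a) - 1))"
  shows "x ^ a = x ^ b"
proof -
  let ?m = "CARD('a) - 1"
  have "x ^ a = x ^ (?m * (a div ?m) + a mod ?m)" by simp
  also have "\<dots> = x ^ (a mod ?m)" by (simp only: power_add power_mult ff_pow_card_minus1[OF assms(1)]) simp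
  also have "\<dots> = x ^ (b mod ?m)" using assms(2) by (simp add: cong_def)
  also have "\<dots> = x ^ (?m * (b div ?m) + b mod ?m)" by (simp only: power_add power_mult ff_pow_card_minus1[OF assms(1)]) simp
  finally show ?thesis by simp
qed

lemma of_nat_pow_CHAR: "(of_nat k :: 'a::{field,finite}) ^ CHAR('a) = of_nat k"
proof (induction k)
  case 0 then show ?case using CHAR_pos_ff[where 'a='a] by simp
next
  case (Suc k)
  have "(of_nat (Suc k) :: 'a) ^ CHAR('a) = (1 + of_nat k) ^ CHAR('a)" by simp
  also have "\<dots> = 1 ^ CHAR('a) + of_nat k ^ CHAR('a)"
    by (rule freshmans_dream) (auto simp: CHAR_prime_ff)
  finally show ?case using Suc by simp
qed

lemma of_nat_pow_CHAR_pow: "(of_nat k :: 'a::{field,finite}) ^ (CHAR('a) ^ i) = of_nat k"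
proof (induction i)
  case (Suc i)
  have "(of_nat k :: 'a) ^ (CHAR('a) ^ Suc i) = ((of_nat k :: 'a) ^ (CHAR('a) ^ i)) ^ CHAR('a)"
    by (simp add: power_mult[symmetric] mult.commute)
  then show ?case using Suc of_nat_pow_CHAR by simp
qed simp

section \<open>Card is a power of the characteristic\<close>

definition fsub :: "'a::{field,finite} set \<Rightarrow> bool" where
  "fsub V \<longleftrightarrow> 0 \<in> V \<and> (\<forall>x\<in>V. \<forall>y\<in>V. x + y \<in> V) \<and> (\<forall>x\<in>V. \<forall>j. of_nat j * x \<in> V)"

lemma fsub_ext:
  fixes V :: "'a::{field,finite} set"
  assumes "fsub V" "v \<notin> V"
  defines "V' \<equiv> (\<lambda>(w, a). w + of_nat a * v) ` (V \<times> {..<CHAR('a)})"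
  shows "fsub V'" "card V' = CHAR('a) * card V"
proof -
  let ?p = "CHAR('a)"
  have p0: "?p > 0" by (rule CHAR_pos_ff)
  have V'alt: "w + of_nat a * v \<in> V'" if "w \<in> V" for w a
  proof -
    have "w + of_nat a * v = (\<lambda>(w, a). w + of_nat a * v) (w, a mod ?p)"
      by (simp add: of_nat_mod_CHAR')
    moreover have "(w, a mod ?p) \<in> V \<times> {..<?p}" using that p0 by simp
    ultimately show ?thesis unfolding V'_def by blast
  qed
  have V'E: "\<exists>w a. w \<in> V \<and> z = w + of_nat a * v" if "z \<in> V'" for z
    using that unfolding V'_def by auto
  have V0: "0 \<in> V" and Vadd: "\<And>x y. x \<in> V \<Longrightarrow> y \<in> V \<Longrightarrow> x + y \<in> V"
    and Vsc: "\<And>x j. x \<in> V \<Longrightarrow> of_nat j * x \<in> V" using assms(1) unfolding fsub_def by auto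
  show "fsub V'"
    unfolding fsub_def
  proof (intro conjI ballI allI)
    show "0 \<in> V'" using V'alt[OF V0, of 0] by simp
  next
    fix x y assume "x \<in> V'" "y \<in> V'"
    then obtain w a w' a' where "w \<in> V" "w' \<in> V" "x = w + of_nat a * v" "y = w' + of_nat a' * v"
      using V'E by meson
    then have "x + y = (w + w') + of_nat (a + a') * v" by (simp add: algebra_simps)
    then show "x + y \<in> V'" using V'alt Vadd \<open>w \<in> V\<close> \<open>w' \<in> V\<close> by metis
  next
    fix x j assume "x \<in> V'"
    then obtain w a where "w \<in> V" "x = w + of_nat a * v" using V'E by meson
    then have "of_nat j * x = of_nat j * w + of_nat (j * a) * v" by (simp add: algebra_simps)
    then show "of_nat j * x \<in> V'" using V'alt Vsc \<open>w \<in> V\<close> by metis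
  qed
  have inj: "inj_on (\<lambda>(w, a). w + of_nat a * v) (V \<times> {..<?p})"
  proof (rule inj_onI, clarify)
    fix w a w' a'
    assume w: "w \<in> V" "w' \<in> V" and a: "a < ?p" "a' < ?p" and eq: "w + of_nat a * v = w' + of_nat a' * v"
    show "w = w' \<and> a = a'"
    proof (cases "a = a'")
      case True then show ?thesis using eq by simp
    next
      case False
      have ne: "(of_nat a :: 'a) \<noteq> of_nat a'"
        using False a by (simp add: of_nat_eq_iff_cong_CHAR cong_def)
      define k where "k = a + (?p - a')"
      have dk: "(of_nat a :: 'a) - of_nat a' = of_nat k"
      proof -
        have "(of_nat k :: 'a) = of_nat a + of_nat (?p - a')" by (simp add: k_def)
        also have "(of_nat (?p - a') :: 'a) = of_nat ?p - of_nat a'" using a by (simp add: of_nat_diff)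
        finally show ?thesis by simp
      qed
      have d0: "(of_nat k :: 'a) \<noteq> 0" using ne dk by (metis eq_iff_diff_eq_0)
      have "(of_nat k :: 'a) * v = w' - w" using eq dk by (simp add: algebra_simps)
      then have "v = of_nat k ^ (CARD('a) - 2) * (w' - w)"
      proof -
        assume h: "(of_nat k :: 'a) * v = w' - w"
        have "of_nat k ^ (CARD('a) - 2) * (of_nat k :: 'a) = of_nat k ^ (CARD('a) - 1)"
          using card_ge2_ff[where 'a='a]
          by (metis Suc_diff_Suc Suc_1 diff_Suc_1 less_le_trans lessI power_Suc2)
        also have "\<dots> = 1" by (rule ff_pow_card_minus1[OF d0])
        finally have "of_nat k ^ (CARD('a) - 2) * (of_nat k :: 'a) = 1" .
        then have "of_nat k ^ (CARD('a) - 2) * ((of_nat k :: 'a) * v) = v" by (metis mult.assoc mult_1)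
        then show ?thesis using h by simp
      qed
      moreover have "w' - w \<in> V"
      proof -
        have "(of_nat (?p - 1) :: 'a) = - 1" using p0 by (simp add: of_nat_diff)
        then have "w' - w = w' + of_nat (?p - 1) * w" by simp
        then show ?thesis using Vadd Vsc w by metis
      qed
      ultimately have "v \<in> V" using Vsc by (metis of_nat_power)
      then show ?thesis using assms(2) by simp
    qed
  qed
  show "card V' = ?p * card V"
    unfolding V'_def by (subst card_image[OF inj]) (simp add: card_cartesian_product)
qed

lemma card_ff_power: "\<exists>n. CARD('a::{field,finite}) = CHAR('a) ^ n"
proof -
  let ?p = "CHAR('a)"
  define M where "M = {V :: 'a set. fsub V \<and> (\<exists>n. card V = ?p ^ n)}"
  have "{0} \<in> M" unfolding M_def fsub_def by (auto intro: exI[of _ 0])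
  have fM: "finite M" by simp
  define c where "c = Max (card ` M)"
  have "c \<in> card ` M" unfolding c_def using \<open>{0} \<in> M\<close> fM by (intro Max_in) auto
  then obtain V where V: "V \<in> M" "card V = c" by auto
  have mx: "card V' \<le> c" if "V' \<in> M" for V' unfolding c_def using fM that by auto
  have "V = UNIV"
  proof (rule ccontr)
    assume "V \<noteq> UNIV"
    then obtain v where v: "v \<notin> V" by auto
    define V' where "V' = (\<lambda>(w, a). w + of_nat a * v) ` (V \<times> {..<?p})"
    have fV: "fsub V" using V unfolding M_def by auto
    from fsub_ext[OF fV v] have h: "fsub V'" "card V' = ?p * card V" unfolding V'_def by auto
    obtain n where "card V = ?p ^ n" using V unfolding M_def by auto
    then have "card V' = ?p ^ Suc n" using h by simp
    then have "V' \<in> M" using h unfolding M_def by blast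
    then have "card V' \<le> card V" using mx V by auto
    moreover have "card V > 0" using fV unfolding fsub_def by (auto simp: card_gt_0_iff)
    ultimately show False using h CHAR_gt1_ff[where 'a='a] by simp
  qed
  then show ?thesis using V unfolding M_def by auto
qed

lemma ff_degree_eq: "CARD('a::{field,finite}) = CHAR('a) ^ ff_degree TYPE('a)"
proof -
  obtain n where n: "CARD('a) = CHAR('a) ^ n" using card_ff_power by blast
  have "ff_degree TYPE('a) = n"
    unfolding ff_degree_def
  proof (rule the_equality)
    show "CARD('a) = CHAR('a) ^ n" by (rule n)
    fix m assume "CARD('a) = CHAR('a) ^ m"
    then show "m = n" using n CHAR_gt1_ff[where 'a='a] by (metis power_inject_exp)
  qed
  then show ?thesis using n by simp
qed

section \<open>Trace\<close>

lemma abs_trace_frob: "abs_trace (x::'a::{field,finite}) ^ CHAR('a) = abs_trace x"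
proof -
  let ?p = "CHAR('a)" and ?n = "ff_degree TYPE('a)"
  define f where "f i = x ^ (?p ^ i)" for i
  have "abs_trace x ^ ?p = (\<Sum>i<?n. (x ^ (?p ^ i)) ^ ?p)"
    unfolding abs_trace_def by (rule freshmans_dream_sum) (auto simp: CHAR_prime_ff)
  also have "\<dots> = (\<Sum>i<?n. f (Suc i))" by (simp add: f_def power_mult[symmetric] mult.commute)
  also have "\<dots> = (\<Sum>i<?n. f i)"
  proof -
    have "f ?n = f 0" unfolding f_def using ff_degree_eq[where 'a='a] ff_pow_card[of x] by simp
    have "(\<Sum>i<Suc ?n. f i) = f 0 + (\<Sum>i<?n. f (Suc i))" by (rule sum.lessThan_Suc_shift)
    moreover have "(\<Sum>i<Suc ?n. f i) = (\<Sum>i<?n. f i) + f ?n" by simp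
    ultimately show ?thesis using \<open>f ?n = f 0\<close> by (simp add: add.commute)
  qed
  finally show ?thesis unfolding abs_trace_def f_def .
qed

lemma frob_fixed_prime_field:
  assumes "(y::'a::{field,finite}) ^ CHAR('a) = y"
  shows "\<exists>k<CHAR('a). of_nat k = y"
proof (rule ccontr)
  assume nex: "\<not> (\<exists>k<CHAR('a). of_nat k = y)"
  let ?p = "CHAR('a)"
  define P :: "'a poly" where "P = Polynomial.monom 1 ?p - [:0, 1:]"
  have p1: "?p > 1" by (rule CHAR_gt1_ff)
  have cP: "Polynomial.coeff P ?p = 1" using p1 by (simp add: P_def coeff_monom coeff_pCons split: nat.split)
  then have P0: "P \<noteq> 0" by auto
  have dP: "degree P \<le> ?p"
    unfolding P_def by (rule order.trans[OF degree_diff_le_max]) (use p1 in \<open>auto simp: degree_monom_eq\<close>)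
  have roots: "{x. poly P x = 0} = {x. x ^ ?p = x}" by (auto simp: P_def poly_monom)
  have F: "insert y (of_nat ` {..<?p}) \<subseteq> {x. poly P x = 0}"
    using assms of_nat_pow_CHAR unfolding roots by auto
  have inj: "inj_on (of_nat :: nat \<Rightarrow> 'a) {..<?p}"
    by (rule inj_onI) (auto simp: of_nat_eq_iff_cong_CHAR cong_def)
  have "card (insert y (of_nat ` {..<?p})) = Suc ?p"
    using nex inj by (subst card_insert_disjoint) (auto simp: card_image)
  moreover have "card (insert y (of_nat ` {..<?p})) \<le> card {x. poly P x = 0}"
    using F by (intro card_mono) auto
  moreover have "card {x. poly P x = 0} \<le> degree P" by (rule card_poly_roots_bound[OF P0])
  ultimately show False using dP by simp
qed

lemma abs_trace_prime_field: "\<exists>k<CHAR('a). of_nat k = abs_trace (x::'a::{field,finite})"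
  by (rule frob_fixed_prime_field[OF abs_trace_frob])

lemma trace_nat_eq:
  assumes "k < CHAR('a)" "of_nat k = abs_trace (y::'a::{field,finite})"
  shows "trace_nat y = k"
  unfolding trace_nat_def
proof (rule the_equality)
  show "k < CHAR('a) \<and> of_nat k = abs_trace y" using assms by simp
  fix k' assume "k' < CHAR('a) \<and> of_nat k' = abs_trace y"
  then have "(of_nat k' :: 'a) = of_nat k" "k' < CHAR('a)" using assms by auto
  then show "k' = k" using assms(1) by (simp add: of_nat_eq_iff_cong_CHAR cong_def)
qed

lemma trace_nat_props: "trace_nat (y::'a::{field,finite}) < CHAR('a) \<and> of_nat (trace_nat y) = abs_trace y"
proof -
  obtain k where "k < CHAR('a)" "of_nat k = abs_trace y" using abs_trace_prime_field by blast
  then show ?thesis using trace_nat_eq by metis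
qed

lemma abs_trace_scale: "abs_trace ((of_nat g :: 'a::{field,finite}) * y) = of_nat g * abs_trace y"
  unfolding abs_trace_def by (simp add: power_mult_distrib of_nat_pow_CHAR_pow sum_distrib_left)

lemma trace_nat_scale:
  "trace_nat ((of_nat g :: 'a::{field,finite}) * y) = (g * trace_nat y) mod CHAR('a)"
proof (rule trace_nat_eq)
  show "(g * trace_nat y) mod CHAR('a) < CHAR('a)" using CHAR_pos_ff[where 'a='a] by simp
  have "(of_nat ((g * trace_nat y) mod CHAR('a)) :: 'a) = of_nat g * of_nat (trace_nat y)"
    by (simp add: of_nat_mod_CHAR')
  also have "\<dots> = abs_trace (of_nat g * y)" using trace_nat_props[of y] by (simp add: abs_trace_scale)
  finally show "(of_nat ((g * trace_nat y) mod CHAR('a)) :: 'a) = abs_trace (of_nat g * y)" .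
qed

lemma psi_scale: "psi ((of_nat g :: 'a::{field,finite}) * y) = zeta CHAR('a) ^ (g * trace_nat y)"
  unfolding psi_def trace_nat_scale using zeta_pow_mod[OF CHAR_pos_ff] by metis



lemma sigma_W:
  fixes s g :: nat
  assumes "coprime s (CARD('a::{field,finite}) - 1)" "coprime CHAR('a) g"
  shows "\<exists>c::'a. c \<noteq> 0 \<and> (\<forall>u. gal_sigma CHAR('a) g (Wsum s u) = Wsum s (c * u))"
proof -
  let ?p = "CHAR('a)"
  have pr: "prime ?p" by (rule CHAR_prime_ff)
  have ndvd: "\<not> ?p dvd g"
  proof
    assume "?p dvd g"
    then have "?p dvd gcd ?p g" by simp
    then show False using assms(2) pr by (simp add: prime_nat_iff)
  qed
  define \<gamma> where "\<gamma> = (of_nat g :: 'a)"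
  have \<gamma>0: "\<gamma> \<noteq> 0" using ndvd unfolding \<gamma>_def by (simp add: of_nat_eq_0_iff_char_dvd)
  obtain t where t: "[s * t = Suc 0] (mod (CARD('a) - 1))"
    using cong_solve_coprime_nat[OF assms(1)] by blast
  define \<beta> where "\<beta> = \<gamma> ^ t"
  have \<beta>0: "\<beta> \<noteq> 0" using \<gamma>0 unfolding \<beta>_def by simp
  have \<beta>s: "\<beta> ^ s = \<gamma>"
  proof -
    have "\<beta> ^ s = \<gamma> ^ (s * t)" unfolding \<beta>_def by (simp add: power_mult[symmetric] mult.commute)
    also have "\<dots> = \<gamma> ^ Suc 0" by (rule ff_pow_cong[OF \<gamma>0 t])
    finally show ?thesis by simp
  qed
  define c where "c = \<gamma> / \<beta>"
  have c0: "c \<noteq> 0" using \<gamma>0 \<beta>0 unfolding c_def by simp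
  have "gal_sigma ?p g (Wsum s u) = Wsum s (c * u)" for u
  proof -
    have "gal_sigma ?p g (Wsum s u) = gal_sigma ?p g (\<Sum>x\<in>UNIV. zeta ?p ^ trace_nat (x ^ s - u * x))"
      unfolding Wsum_def psi_def by simp
    also have "\<dots> = (\<Sum>x\<in>UNIV. zeta ?p ^ (g * trace_nat (x ^ s - u * x)))"
      by (rule gal_sigma_sum[OF pr ndvd]) simp
    also have "\<dots> = (\<Sum>x\<in>UNIV. psi (\<gamma> * (x ^ s - u * x)))"
      unfolding \<gamma>_def psi_scale by simp
    also have "\<dots> = (\<Sum>x\<in>UNIV. psi ((\<beta> * x) ^ s - (c * u) * (\<beta> * x)))"
    proof (rule sum.cong)
      fix x :: 'a
      have "\<gamma> * (x ^ s - u * x) = (\<beta> * x) ^ s - (c * u) * (\<beta> * x)"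
        using \<beta>0 \<beta>s unfolding c_def by (simp add: power_mult_distrib field_simps)
      then show "psi (\<gamma> * (x ^ s - u * x)) = psi ((\<beta> * x) ^ s - (c * u) * (\<beta> * x))" by simp
    qed simp
    also have "\<dots> = (\<Sum>y\<in>UNIV. psi (y ^ s - (c * u) * y))"
      by (rule sum.reindex_bij_witness[of _ "\<lambda>y. y / \<beta>" "\<lambda>x. \<beta> * x"]) (use \<beta>0 in auto)
    also have "\<dots> = Wsum s (c * u)" unfolding Wsum_def by simp
    finally show ?thesis .
  qed
  then show ?thesis using c0 by blast
qed


lemma funpow_fix_mult:
  assumes "(f ^^ m) B = B"
  shows "(f ^^ (m * j)) B = B"
proof (induction j)
  case (Suc j)
  have "(f ^^ (m * Suc j)) B = (f ^^ m) ((f ^^ (m * j)) B)"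
    by (simp add: funpow_add mult.commute)
  then show ?case using Suc assms by simp
qed simp

theorem lemma2p3:
  fixes T :: "'a::{field,finite} itself"
    and s g k :: nat and A :: "nat \<Rightarrow> complex"
  assumes "0 < s"
    and "coprime s (CARD('a) - 1)"
    and "residue_primroot CHAR('a) g"
    and "0 < k"
    and "inj_on A {..<k}"
    and "\<forall>i<k. A i \<in> Wset T s"
    and "\<forall>i<k. gal_sigma CHAR('a) g (A i) = A ((i + 1) mod k)"
  shows "k dvd tau_order T s g
    \<and> (\<forall>i<k. NA T s (A i) = NA T s (A 0))
    \<and> (tau_order T s g div k) dvd NA T s (A 0)"
proof -
  let ?p = "CHAR('a)"
  define \<sigma> where "\<sigma> = gal_sigma ?p g"
  define W where "W = (Wsum s :: 'a \<Rightarrow> complex)"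
  have cop: "coprime ?p g" using assms(3) by (simp add: residue_primroot_def)
  obtain c :: 'a where c0: "c \<noteq> 0" and sW: "\<And>u. \<sigma> (W u) = W (c * u)"
    using sigma_W[OF assms(2) cop] unfolding \<sigma>_def W_def by blast
  have sWn: "(\<sigma> ^^ n) (W u) = W (c ^ n * u)" for n u
    by (induction n) (simp_all add: sW mult.assoc)
  have Wset_eq: "Wset T s = W ` (UNIV - {0})" unfolding Wset_def W_def by simp
  define P where "P n \<longleftrightarrow> 0 < n \<and> (\<forall>B\<in>Wset T s. (\<sigma> ^^ n) B = B)" for n
  have tau: "tau_order T s g = (LEAST n. P n)" unfolding tau_order_def P_def \<sigma>_def by simp
  have Pq: "P (CARD('a) - 1)"
    unfolding P_def Wset_eq
  proof (intro conjI ballI)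
    show "0 < CARD('a) - 1" using card_ge2_ff[where 'a='a] by simp
    fix B assume "B \<in> W ` (UNIV - {0})"
    then obtain u where "B = W u" by auto
    then show "(\<sigma> ^^ (CARD('a) - 1)) B = B" using sWn ff_pow_card_minus1[OF c0] by simp
  qed
  define m where "m = tau_order T s g"
  have Pm: "P m" unfolding m_def tau by (rule LeastI[of P, OF Pq])
  have m_min: "\<And>n. P n \<Longrightarrow> m \<le> n" unfolding m_def tau by (rule Least_le)
  have m_dvd: "m dvd n" if "P n" for n
  proof -
    have "n mod m = 0"
    proof (rule ccontr)
      assume nz: "n mod m \<noteq> 0"
      have "P (n mod m)"
        unfolding P_def
      proof (intro conjI ballI)
        show "0 < n mod m" using nz by simp
        fix B assume B: "B \<in> Wset T s"
        have "(\<sigma> ^^ (m * (n div m))) B = B"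
          by (rule funpow_fix_mult) (use Pm B in \<open>auto simp: P_def\<close>)
        then have "(\<sigma> ^^ (n mod m)) B = (\<sigma> ^^ (n mod m)) ((\<sigma> ^^ (m * (n div m))) B)" by simp
        also have "\<dots> = (\<sigma> ^^ n) B"
          by (metis comp_apply funpow_add mod_mult_div_eq add.commute)
        also have "\<dots> = B" using that B by (simp add: P_def)
        finally show "(\<sigma> ^^ (n mod m)) B = B" .
      qed
      then have "m \<le> n mod m" by (rule m_min)
      moreover have "n mod m < m" using Pm by (simp add: P_def)
      ultimately show False by simp
    qed
    then show ?thesis by auto
  qed
  have orbA: "(\<sigma> ^^ n) (A 0) = A (n mod k)" for n
  proof (induction n)
    case 0 then show ?case by simp
  next
    case (Suc n)
    have "(\<sigma> ^^ Suc n) (A 0) = \<sigma> (A (n mod k))" using Suc by simp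
    also have "\<dots> = A ((n mod k + 1) mod k)" using assms(7) assms(4) \<sigma>_def by simp
    also have "(n mod k + 1) mod k = Suc n mod k" by (simp add: mod_Suc_eq)
    finally show ?case .
  qed
  have A0W: "A 0 \<in> Wset T s" using assms(6) assms(4) by simp
  have kdvd: "k dvd m"
  proof -
    have "A (m mod k) = A 0" using orbA[of m] Pm A0W by (simp add: P_def)
    then have "m mod k = 0" using assms(5) assms(4) by (auto dest: inj_onD)
    then show ?thesis by auto
  qed
  define S where "S B = {u. u \<noteq> 0 \<and> W u = B}" for B
  have NA_S: "NA T s B = card (S B)" for B unfolding NA_def S_def W_def by simp
  have step: "card (S B) \<le> card (S (\<sigma> B))" for B
  proof (rule card_inj_on_le)
    show "inj_on (\<lambda>u. c * u) (S B)" using c0 by (auto intro: inj_onI)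
    show "(\<lambda>u. c * u) ` S B \<subseteq> S (\<sigma> B)" using c0 sW by (auto simp: S_def)
  qed simp
  have mono: "\<forall>i\<le>j. card (S (A i)) \<le> card (S (A j))" if "j < k" for j
    using that
  proof (induction j)
    case 0 then show ?case by simp
  next
    case (Suc j)
    have "card (S (A j)) \<le> card (S (\<sigma> (A j)))" by (rule step)
    also have "\<sigma> (A j) = A (Suc j)" using assms(7) Suc.prems \<sigma>_def by simp
    finally have "card (S (A j)) \<le> card (S (A (Suc j)))" .
    then show ?case using Suc by (auto simp: le_Suc_eq)
  qed
  have last: "card (S (A (k - 1))) \<le> card (S (A 0))"
  proof -
    have "card (S (A (k - 1))) \<le> card (S (\<sigma> (A (k - 1))))" by (rule step)
    also have "\<sigma> (A (k - 1)) = A 0" using assms(7)[rule_format, of "k - 1"] assms(4) \<sigma>_def by simp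
    finally show ?thesis .
  qed
  have eqN: "\<forall>i<k. NA T s (A i) = NA T s (A 0)"
  proof (intro allI impI)
    fix i assume i: "i < k"
    have "card (S (A 0)) \<le> card (S (A i))" using mono[OF i] by simp
    moreover have "card (S (A i)) \<le> card (S (A (k - 1)))" using mono[of "k - 1"] i assms(4) by simp
    ultimately show "NA T s (A i) = NA T s (A 0)" using last NA_S by simp
  qed
  define d where "d = c ^ k"
  have d0: "d \<noteq> 0" using c0 by (simp add: d_def)
  define e where "e = (LEAST e. 0 < e \<and> d ^ e = 1)"
  have "0 < CARD('a) - 1 \<and> d ^ (CARD('a) - 1) = 1"
    using card_ge2_ff[where 'a='a] ff_pow_card_minus1[OF d0] by simp
  then have e: "0 < e" "d ^ e = 1" unfolding e_def by (metis (mono_tags, lifting) LeastI)+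
  have e_min: "\<And>n. 0 < n \<Longrightarrow> d ^ n = 1 \<Longrightarrow> e \<le> n" unfolding e_def by (rule Least_le) simp
  have "P (k * e)"
    unfolding P_def Wset_eq
  proof (intro conjI ballI)
    show "0 < k * e" using e assms(4) by simp
    fix B assume "B \<in> W ` (UNIV - {0})"
    then obtain u where "B = W u" by auto
    then show "(\<sigma> ^^ (k * e)) B = B" using sWn e(2) by (simp add: power_mult d_def)
  qed
  then have "m dvd k * e" by (rule m_dvd)
  moreover obtain m' where m'1: "m = k * m'" using kdvd by (elim dvdE)
  ultimately have "m' dvd e" using assms(4) by (simp add: nat_mult_dvd_cancel_disj)
  with m'1 have m': "m = k * m'" "m' dvd e" by auto
  have mdiv: "m div k = m'" using m' assms(4) by simp
  define S0 where "S0 = S (A 0)"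
  have dS0: "d * u \<in> S0" if "u \<in> S0" for u
  proof -
    have "W (d * u) = (\<sigma> ^^ k) (W u)" using sWn d_def by simp
    also have "\<dots> = A 0" using that orbA[of k] by (simp add: S0_def S_def)
    finally show ?thesis using that d0 by (simp add: S0_def S_def)
  qed
  define Orb where "Orb u = (\<lambda>i. d ^ i * u) ` {..<e}" for u
  have dpow_mod: "d ^ i = d ^ (i mod e)" for i
  proof -
    have "d ^ i = d ^ (e * (i div e) + i mod e)" by simp
    also have "\<dots> = d ^ (i mod e)" by (simp only: power_add power_mult e(2)) simp
    finally show ?thesis .
  qed
  have O_alt: "Orb u = range (\<lambda>i. d ^ i * u)" for u
  proof
    show "Orb u \<subseteq> range (\<lambda>i. d ^ i * u)" unfolding Orb_def by auto
    show "range (\<lambda>i. d ^ i * u) \<subseteq> Orb u"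
    proof
      fix z assume "z \<in> range (\<lambda>i. d ^ i * u)"
      then obtain i where "z = d ^ i * u" by auto
      then have "z = d ^ (i mod e) * u" using dpow_mod by metis
      moreover have "i mod e < e" using e(1) by simp
      ultimately show "z \<in> Orb u" unfolding Orb_def by auto
    qed
  qed
  have O_sub: "Orb u \<subseteq> S0" if "u \<in> S0" for u
  proof -
    have "d ^ i * u \<in> S0" for i
      by (induction i) (use that dS0 in \<open>auto simp: mult.assoc\<close>)
    then show ?thesis unfolding O_alt by auto
  qed
  have O_card: "card (Orb u) = e" if "u \<noteq> 0" for u
    unfolding Orb_def
  proof (subst card_image)
    show "inj_on (\<lambda>i. d ^ i * u) {..<e}"
    proof (rule inj_onI)
      fix i j assume ij: "i \<in> {..<e}" "j \<in> {..<e}" and eq: "d ^ i * u = d ^ j * u"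
      then have eq': "d ^ i = d ^ j" using that by simp
      show "i = j"
      proof (rule ccontr)
        assume "i \<noteq> j"
        then consider "i < j" | "j < i" by linarith
        then show False
        proof cases
          case 1
          have "d ^ j = d ^ i * d ^ (j - i)" using 1 by (simp add: power_add[symmetric])
          then have "d ^ (j - i) = 1" using eq' d0 by simp
          then have "e \<le> j - i" using 1 by (intro e_min) auto
          then show False using ij by auto
        next
          case 2
          have "d ^ i = d ^ j * d ^ (i - j)" using 2 by (simp add: power_add[symmetric])
          then have "d ^ (i - j) = 1" using eq' d0 by simp
          then have "e \<le> i - j" using 2 by (intro e_min) auto
          then show False using ij by auto
        qed
      qed
    qed
  qed simp
  have O_mem: "Orb v = Orb u" if vu: "v \<in> Orb u" for u v
  proof -
    obtain j where j: "v = d ^ j * u" using vu unfolding O_alt by auto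
    have u_eq: "u = d ^ (e * j - j) * v"
    proof -
      have "d ^ (e * j - j) * v = d ^ (e * j - j + j) * u" by (simp add: j power_add mult.assoc)
      also have "e * j - j + j = e * j"
      proof -
        have "1 * j \<le> e * j" using e(1) by (intro mult_le_mono1) simp
        then show ?thesis by simp
      qed
      also have "d ^ (e * j) = 1" by (simp add: power_mult e(2))
      finally show ?thesis by simp
    qed
    show ?thesis
    proof
      show "Orb v \<subseteq> Orb u" unfolding O_alt
        by (auto simp: j mult.assoc power_add[symmetric] intro: range_eqI)
      show "Orb u \<subseteq> Orb v" unfolding O_alt
        by (subst u_eq) (auto simp: mult.assoc power_add[symmetric] intro: range_eqI)
    qed
  qed
  have "e dvd card (\<Union>(Orb ` S0))"
  proof (rule dvd_partition)
    show "finite (\<Union>(Orb ` S0))" by simp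
    show "\<forall>c\<in>Orb ` S0. e dvd card c" using O_card by (auto simp: S0_def S_def)
    show "\<forall>c1\<in>Orb ` S0. \<forall>c2\<in>Orb ` S0. c1 \<noteq> c2 \<longrightarrow> c1 \<inter> c2 = {}"
      using O_mem by blast
  qed
  moreover have "\<Union>(Orb ` S0) = S0"
  proof
    show "\<Union>(Orb ` S0) \<subseteq> S0" using O_sub by blast
    show "S0 \<subseteq> \<Union>(Orb ` S0)"
    proof
      fix u assume "u \<in> S0"
      moreover have "u \<in> Orb u" unfolding O_alt by (rule range_eqI[of _ _ 0]) simp
      ultimately show "u \<in> \<Union>(Orb ` S0)" by blast
    qed
  qed
  ultimately have "e dvd card S0" by simp
  then have "m' dvd NA T s (A 0)" using m'(2) NA_S S0_def by (metis dvd_trans)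
  then have fin: "(tau_order T s g div k) dvd NA T s (A 0)" using mdiv m_def by simp
  have "k dvd tau_order T s g" using kdvd m_def by simp
  then show ?thesis using eqN fin by blast
qed


end
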